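(* Let $\mathcal{N}$ be a cactus network, let $t$ be a sink of $\mathcal{N}$ with parents $p_l$ and $p_r$, and let $s$ be the lowest common ancestor of $\{p_l,p_r\}$. Let $P_l$ and $P_r$ be directed paths from $s$ to $p_l$ and from $s$ to $p_r$, respectively. Then (i) $P_l$ and $P_r$ are edge-disjoint; (ii) neither $P_l$ nor $P_r$ contains a sink, except possibly the vertex $s$; (iii) $P_l$ and $P_r$ are the unique directed paths from $s$ to $p_l$ and from $s$ to $p_r$.
   Context: A cactus network is a finite directed acyclic graph $\mathcal{N}$ with a unique vertex of indegree $0$ (the root) such that in its underlying undirected graph $\mathcal{N}^\star$ every edge belongs to at most one simple cycle. $u\succcurlyeq v$ means there is a directed path (possibly of length $0$) from $u$ to $v$; $u\succ v$ means $u\succcurlyeq v$, $u\neq v$. A lowest common ancestor of a set $V$ is a vertex $u$ with $u\succcurlyeq v$ for all $v\in V$ such that no $u'$ with $u\succ u'$ satisfies $u'\succcurlyeq v$ for all $v\in V$; in a cactus network it is unique. A sink is a vertex of indegree $2$ (every vertex of a cactus network has indegree at most $2$). *)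

theory Defs
  imports Main
begin

definition indeg :: "('a \<times> 'a) set \<Rightarrow> 'a \<Rightarrow> nat" where
  "indeg E v = card {u. (u, v) \<in> E}"

definition uadj :: "('a \<times> 'a) set \<Rightarrow> 'a \<Rightarrow> 'a \<Rightarrow> bool" where
  "uadj E u v \<longleftrightarrow> (u, v) \<in> E \<or> (v, u) \<in> E"

definition ucycle :: "('a \<times> 'a) set \<Rightarrow> 'a list \<Rightarrow> bool" where
  "ucycle E cs \<longleftrightarrow> length cs \<ge> 3 \<and> distinct cs \<and>
     (\<forall>i < length cs. uadj E (cs ! i) (cs ! ((i + 1) mod length cs)))"

definition cycle_edges :: "'a list \<Rightarrow> 'a set set" where
  "cycle_edges cs = {{cs ! i, cs ! ((i + 1) mod length cs)} | i. i < length cs}"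

definition simple_cycles :: "('a \<times> 'a) set \<Rightarrow> 'a set set set" where
  "simple_cycles E = {cycle_edges cs | cs. ucycle E cs}"

definition cactus_network :: "'a set \<Rightarrow> ('a \<times> 'a) set \<Rightarrow> bool" where
  "cactus_network V E \<longleftrightarrow>
     finite V \<and> E \<subseteq> V \<times> V \<and> acyclic E \<and>
     (\<exists>!r. r \<in> V \<and> indeg E r = 0) \<and>
     (\<forall>e C1 C2. C1 \<in> simple_cycles E \<and> C2 \<in> simple_cycles E \<and> e \<in> C1 \<and> e \<in> C2
        \<longrightarrow> C1 = C2)"

definition reach :: "('a \<times> 'a) set \<Rightarrow> 'a \<Rightarrow> 'a \<Rightarrow> bool" where
  "reach E u v \<longleftrightarrow> (u, v) \<in> E\<^sup>*"

definition is_lca :: "('a \<times> 'a) set \<Rightarrow> 'a set \<Rightarrow> 'a \<Rightarrow> bool" where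
  "is_lca E A u \<longleftrightarrow> (\<forall>v\<in>A. reach E u v) \<and>
     \<not> (\<exists>u'. reach E u u' \<and> u \<noteq> u' \<and> (\<forall>v\<in>A. reach E u' v))"

definition is_sink :: "('a \<times> 'a) set \<Rightarrow> 'a \<Rightarrow> bool" where
  "is_sink E v \<longleftrightarrow> indeg E v = 2"

definition dpath :: "('a \<times> 'a) set \<Rightarrow> 'a list \<Rightarrow> 'a \<Rightarrow> 'a \<Rightarrow> bool" where
  "dpath E ps u v \<longleftrightarrow> ps \<noteq> [] \<and> hd ps = u \<and> last ps = v \<and>
     (\<forall>i. i + 1 < length ps \<longrightarrow> (ps ! i, ps ! (i + 1)) \<in> E)"

definition path_edges :: "'a list \<Rightarrow> ('a \<times> 'a) set" where
  "path_edges ps = set (zip ps (tl ps))"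

end

theory Submission
  imports Defs
begin


lemma pe_nth: "path_edges ys = {(ys!i, ys!(Suc i)) | i. Suc i < length ys}"
  unfolding path_edges_def by (auto simp: set_zip nth_tl)

lemma pe_Nil[simp]: "path_edges [] = {}" and pe_single[simp]: "path_edges [x] = {}"
  by (auto simp: path_edges_def)

lemma pe_Cons2[simp]: "path_edges (x # y # xs) = insert (x,y) (path_edges (y#xs))"
  by (auto simp: path_edges_def)

lemma pe_Cons: "xs \<noteq> [] \<Longrightarrow> path_edges (x # xs) = insert (x, hd xs) (path_edges xs)"
  by (cases xs) auto

lemma pe_append: "xs \<noteq> [] \<Longrightarrow> ys \<noteq> [] \<Longrightarrow>
   path_edges (xs @ ys) = path_edges xs \<union> {(last xs, hd ys)} \<union> path_edges ys"
proof (induction xs)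
  case Nil then show ?case by simp
next
  case (Cons x xs)
  show ?case
  proof (cases "xs = []")
    case True then show ?thesis using Cons by (simp add: pe_Cons)
  next
    case False then show ?thesis using Cons by (auto simp: pe_Cons)
  qed
qed

lemma pe_snoc: "xs \<noteq> [] \<Longrightarrow> path_edges (xs @ [y]) = insert (last xs, y) (path_edges xs)"
  using pe_append[of xs "[y]"] by auto

lemma pe_rev: "path_edges (rev xs) = (path_edges xs)\<inverse>"
proof (induction xs)
  case Nil then show ?case by simp
next
  case (Cons x xs)
  show ?case
  proof (cases "xs = []")
    case True then show ?thesis by simp
  next
    case False
    then show ?thesis using Cons by (simp add: pe_snoc pe_Cons last_rev) blast
  qed
qed

lemma pe_mem: "(p,q) \<in> path_edges xs \<Longrightarrow> p \<in> set xs \<and> q \<in> set (tl xs)"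
  unfolding path_edges_def by (auto dest: set_zip_leftD set_zip_rightD)

lemma pe_mem2: "(p,q) \<in> path_edges xs \<Longrightarrow> p \<in> set xs \<and> q \<in> set xs"
  using pe_mem by (metis list.set_sel(2) tl_Nil empty_iff list.set(1))

lemma dpath_iff: "dpath E ps u v \<longleftrightarrow> ps \<noteq> [] \<and> hd ps = u \<and> last ps = v \<and> path_edges ps \<subseteq> E"
  unfolding dpath_def pe_nth by auto

lemma reach_from_hd: "path_edges (x#xs) \<subseteq> E \<Longrightarrow> y \<in> set xs \<Longrightarrow> (x,y) \<in> E\<^sup>+"
proof (induction xs arbitrary: x)
  case Nil then show ?case by simp
next
  case (Cons a xs)
  have xa: "(x,a) \<in> E" using Cons.prems by simp
  show ?case
  proof (cases "y = a")
    case True then show ?thesis using xa by auto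
  next
    case False
    then have "y \<in> set xs" using Cons.prems by simp
    moreover have "path_edges (a#xs) \<subseteq> E" using Cons.prems by simp
    ultimately have "(a,y) \<in> E\<^sup>+" using Cons.IH by blast
    then show ?thesis using xa by auto
  qed
qed

lemma reach_to_last: "path_edges xs \<subseteq> E \<Longrightarrow> y \<in> set xs \<Longrightarrow> (y, last xs) \<in> E\<^sup>*"
proof (induction xs)
  case Nil then show ?case by simp
next
  case (Cons x xs)
  show ?case
  proof (cases "xs = []")
    case True then show ?thesis using Cons by simp
  next
    case False
    have sub: "path_edges xs \<subseteq> E" using Cons.prems False by (simp add: pe_Cons)
    show ?thesis
    proof (cases "y = x")
      case True
      have "(x, last xs) \<in> E\<^sup>+" using reach_from_hd[OF Cons.prems(1)] False by simp
      then show ?thesis using True False by simp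
    next
      case f2: False
      then show ?thesis using Cons sub False by simp
    qed
  qed
qed

lemma distinct_path: "acyclic E \<Longrightarrow> path_edges xs \<subseteq> E \<Longrightarrow> distinct xs"
proof (induction xs)
  case Nil then show ?case by simp
next
  case (Cons x xs)
  have "x \<notin> set xs" using reach_from_hd[OF Cons.prems(2)] Cons.prems(1)
    unfolding acyclic_def by blast
  moreover have "path_edges xs \<subseteq> E" using Cons.prems(2)
    by (cases "xs = []") (auto simp: pe_Cons)
  ultimately show ?case using Cons by simp
qed

lemma pe_pred_unique: "distinct xs \<Longrightarrow> (p,q) \<in> path_edges xs \<Longrightarrow> (p',q) \<in> path_edges xs \<Longrightarrow> p = p'"
proof (induction xs)
  case Nil then show ?case by simp
next
  case (Cons x xs)
  show ?case
  proof (cases "xs = []")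
    case True then show ?thesis using Cons by simp
  next
    case False
    have hd_notin: "(r, hd xs) \<notin> path_edges xs" for r
    proof
      assume "(r, hd xs) \<in> path_edges xs"
      then have "hd xs \<in> set (tl xs)" using pe_mem by fast
      moreover have "distinct xs" using Cons.prems by simp
      ultimately show False using False by (cases xs) auto
    qed
    from Cons.prems False hd_notin show ?thesis by (auto simp: pe_Cons intro: Cons.IH)
  qed
qed

lemma has_pred: "v \<in> set P \<Longrightarrow> v \<noteq> hd P \<Longrightarrow> \<exists>u. (u,v) \<in> path_edges P"
proof (induction P)
  case Nil then show ?case by simp
next
  case (Cons x xs)
  then have v: "v \<in> set xs" by simp
  then have ne: "xs \<noteq> []" by auto
  show ?case
  proof (cases "v = hd xs")
    case True then show ?thesis using ne by (auto simp: pe_Cons)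
  next
    case False then show ?thesis using Cons.IH v ne by (auto simp: pe_Cons)
  qed
qed

lemma rtrancl_path: "(x,y) \<in> E\<^sup>* \<Longrightarrow> \<exists>ps. dpath E ps x y"
proof (induction rule: rtrancl_induct)
  case base
  then show ?case by (rule exI[of _ "[x]"]) (simp add: dpath_iff)
next
  case (step y z)
  then obtain ps where "dpath E ps x y" by blast
  then show ?case by (intro exI[of _ "ps @ [z]"]) (auto simp: dpath_iff pe_snoc step)
qed



lemma pe_closed: assumes "cs \<noteq> []"
  shows "path_edges (cs @ [hd cs]) = {(cs!i, cs!((i+1) mod length cs)) | i. i < length cs}"
proof -
  let ?n = "length cs"
  have n: "?n > 0" using assms by simp
  have A: "(cs @ [hd cs]) ! i = cs ! i" if "i < ?n" for i using that by (simp add: nth_append)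
  have B: "(cs @ [hd cs]) ! Suc i = cs ! ((i+1) mod ?n)" if "i < ?n" for i
  proof (cases "Suc i < ?n")
    case True then show ?thesis by (simp add: nth_append)
  next
    case False
    then have "Suc i = ?n" using that by simp
    then show ?thesis using assms by (simp add: nth_append hd_conv_nth)
  qed
  have L: "length (cs @ [hd cs]) = Suc ?n" by simp
  show ?thesis unfolding pe_nth L
  proof (intro equalityI subsetI)
    fix e assume "e \<in> {((cs @ [hd cs]) ! i, (cs @ [hd cs]) ! Suc i) |i. Suc i < Suc ?n}"
    then obtain i where "i < ?n" "e = ((cs @ [hd cs]) ! i, (cs @ [hd cs]) ! Suc i)" by auto
    then show "e \<in> {(cs!i, cs!((i+1) mod length cs)) | i. i < length cs}" using A B by auto
  next
    fix e assume "e \<in> {(cs!i, cs!((i+1) mod length cs)) | i. i < length cs}"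
    then obtain i where "i < ?n" "e = (cs!i, cs!((i+1) mod length cs))" by auto
    then show "e \<in> {((cs @ [hd cs]) ! i, (cs @ [hd cs]) ! Suc i) |i. Suc i < Suc ?n}"
      using A[of i] B[of i] by (intro CollectI exI[of _ i]) auto
  qed
qed

lemma cycle_edges_conv: "cs \<noteq> [] \<Longrightarrow> cycle_edges cs = (\<lambda>(p,q). {p,q}) ` path_edges (cs @ [hd cs])"
  unfolding cycle_edges_def by (auto simp: pe_closed)

lemma ucycle_conv: "cs \<noteq> [] \<Longrightarrow> ucycle E cs \<longleftrightarrow> length cs \<ge> 3 \<and> distinct cs \<and>
   (\<forall>(p,q) \<in> path_edges (cs @ [hd cs]). uadj E p q)"
  unfolding ucycle_def by (auto simp: pe_closed)



lemma lca_inter: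
  assumes lca: "is_lca E {a,b} x" and P: "dpath E P x a" and Q: "dpath E Q x b"
    and y: "y \<in> set P" "y \<in> set Q"
  shows "y = x"
proof (rule ccontr)
  assume ne: "y \<noteq> x"
  have "(x,y) \<in> E\<^sup>*" using reach_to_last[of "rev P" E y] P y
    by (metis dpath_iff reach_from_hd hd_Cons_tl list.set_cases set_ConsD trancl_into_rtrancl rtrancl.rtrancl_refl)
  moreover have "(y,a) \<in> E\<^sup>*" using reach_to_last[of P E y] P y by (auto simp: dpath_iff)
  moreover have "(y,b) \<in> E\<^sup>*" using reach_to_last[of Q E y] Q y by (auto simp: dpath_iff)
  ultimately show False using lca ne unfolding is_lca_def reach_def by auto
qed

lemma c_notin:
  assumes ac: "acyclic E" and P: "dpath E P x a" and ac2: "(a,c) \<in> E"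
  shows "c \<notin> set P"
proof
  assume "c \<in> set P"
  then have "(c,a) \<in> E\<^sup>*" using reach_to_last[of P E c] P by (auto simp: dpath_iff)
  with ac2 have "(a,a) \<in> E\<^sup>+" by auto
  with ac show False unfolding acyclic_def by blast
qed



lemma cyc:
  assumes ac: "acyclic E" and lca: "is_lca E {a,b} x"
    and P: "dpath E P x a" and Q: "dpath E Q x b" and ab: "a \<noteq> b"
    and ac1: "(a,c) \<in> E" and bc: "(b,c) \<in> E"
  shows "ucycle E (P @ c # rev (tl Q)) \<and>
    cycle_edges (P @ c # rev (tl Q)) = (\<lambda>(p,q). {p,q}) ` (path_edges P \<union> path_edges Q \<union> {(a,c),(b,c)})"
proof -
  let ?cs = "P @ c # rev (tl Q)"
  have Pne: "P \<noteq> []" and hP: "hd P = x" and lP: "last P = a" and eP: "path_edges P \<subseteq> E"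
    using P by (auto simp: dpath_iff)
  have Qne: "Q \<noteq> []" and hQ: "hd Q = x" and lQ: "last Q = b" and eQ: "path_edges Q \<subseteq> E"
    using Q by (auto simp: dpath_iff)
  have Qeq: "Q = x # tl Q" using Qne hQ by (cases Q) auto
  have cne: "?cs \<noteq> []" by simp
  have hcs: "hd ?cs = x" using Pne hP by simp
  have closed: "?cs @ [hd ?cs] = P @ c # rev Q"
    using hcs by (subst (2) Qeq) simp
  have revQne: "rev Q \<noteq> []" using Qne by simp
  have hrev: "hd (rev Q) = b" using lQ Qne by (simp add: hd_rev)
  have PE: "path_edges (?cs @ [hd ?cs]) = path_edges P \<union> {(a,c)} \<union> ({(c,b)} \<union> (path_edges Q)\<inverse>)"
    unfolding closed using pe_append[OF Pne, of "c # rev Q"] pe_Cons[OF revQne, of c] lP hrev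
    by (simp add: pe_rev)
  have dP: "distinct P" using distinct_path[OF ac eP] .
  have dQ: "distinct Q" using distinct_path[OF ac eQ] .
  have cP: "c \<notin> set P" using c_notin[OF ac P ac1] .
  have cQ: "c \<notin> set Q" using c_notin[OF ac Q bc] .
  have disj: "set P \<inter> set (tl Q) = {}"
  proof (rule ccontr)
    assume "set P \<inter> set (tl Q) \<noteq> {}"
    then obtain y where y: "y \<in> set P" "y \<in> set (tl Q)" by blast
    then have "y \<in> set Q" using Qeq by (metis list.set_intros(2))
    then have "y = x" using lca_inter[OF lca P Q] y by blast
    moreover have "x \<notin> set (tl Q)" using dQ Qeq by (metis distinct.simps(2))
    ultimately show False using y by simp
  qed
  have dist: "distinct ?cs" using dP dQ cP cQ disj Qeq
    by (auto simp: distinct_tl) (metis list.set_intros(2))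
  have len: "length ?cs \<ge> 3"
  proof (cases "tl Q = []")
    case False
    then have "length (tl Q) \<ge> 1" by (cases "tl Q") auto
    moreover have "length P \<ge> 1" using Pne by (cases P) auto
    ultimately show ?thesis by simp
  next
    case True
    then have "b = x" using Qeq lQ by (metis last_ConsL)
    then have "P \<noteq> [x]" using lP ab by auto
    then have "length P \<ge> 2" using Pne hP by (cases P; cases "tl P") auto
    then show ?thesis by simp
  qed
  have adj: "\<forall>(p,q) \<in> path_edges (?cs @ [hd ?cs]). uadj E p q"
    unfolding PE using eP eQ ac1 bc by (auto simp: uadj_def)
  have U: "ucycle E ?cs" using ucycle_conv[OF cne] dist len adj by blast
  have "cycle_edges ?cs = (\<lambda>(p,q). {p,q}) ` (path_edges P \<union> {(a,c)} \<union> ({(c,b)} \<union> (path_edges Q)\<inverse>))"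
    using cycle_edges_conv[OF cne] PE by simp
  also have "\<dots> = (\<lambda>(p,q). {p,q}) ` (path_edges P \<union> path_edges Q \<union> {(a,c),(b,c)})"
    by (auto simp: image_iff insert_commute) 
  finally show ?thesis using U by blast
qed



lemma cactus_basic: assumes "cactus_network V E"
  shows "finite E" "acyclic E" "E \<subseteq> V \<times> V" "wf E" "wf (E\<inverse>)"
proof -
  show fE: "finite E" using assms unfolding cactus_network_def
    by (meson finite_SigmaI finite_subset)
  show ac: "acyclic E" using assms unfolding cactus_network_def by blast
  show "E \<subseteq> V \<times> V" using assms unfolding cactus_network_def by blast
  show "wf E" using finite_acyclic_wf[OF fE ac] .
  show "wf (E\<inverse>)" using finite_acyclic_wf_converse[OF fE ac] .
qed

lemma root_exists: assumes c: "cactus_network V E"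
  shows "\<exists>r. \<forall>y\<in>V. (r,y) \<in> E\<^sup>*"
proof -
  obtain r where r: "r \<in> V" "indeg E r = 0" and run: "\<And>y. y \<in> V \<Longrightarrow> indeg E y = 0 \<Longrightarrow> y = r"
  proof -
    have "\<exists>!r. r \<in> V \<and> indeg E r = 0" using c unfolding cactus_network_def by (elim conjE)
    then show ?thesis using that by blast
  qed
  note cb = cactus_basic[OF c]
  have "y \<in> V \<longrightarrow> (r,y) \<in> E\<^sup>*" for y
    using cb(4)
  proof (induction y rule: wf_induct_rule)
    case (less y)
    show ?case
    proof
      assume yV: "y \<in> V"
      show "(r,y) \<in> E\<^sup>*"
      proof (cases "{u. (u,y) \<in> E} = {}")
        case True
        then have "indeg E y = 0" unfolding indeg_def by simp
        then show ?thesis using run yV by simp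
      next
        case False
        then obtain u where u: "(u,y) \<in> E" by blast
        then have "u \<in> V" using cb(3) by blast
        then have "(r,u) \<in> E\<^sup>*" using less u by blast
        then show ?thesis using u by auto
      qed
    qed
  qed
  then show ?thesis by blast
qed

lemma lca_exists: assumes c: "cactus_network V E" and "u \<in> V" "w \<in> V"
  shows "\<exists>x. is_lca E {u,w} x"
proof -
  obtain r where r: "\<forall>y\<in>V. (r,y) \<in> E\<^sup>*" using root_exists[OF c] by blast
  let ?A = "{x. (x,u) \<in> E\<^sup>* \<and> (x,w) \<in> E\<^sup>*}"
  have rA: "r \<in> ?A" using r assms(2,3) by blast
  obtain z where z: "z \<in> ?A" and zmin: "\<And>y. (y,z) \<in> E\<inverse> \<Longrightarrow> y \<notin> ?A"
    by (rule wfE_min[OF cactus_basic(5)[OF c] rA]) iprover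
  have zu: "(z,u) \<in> E\<^sup>*" and zw: "(z,w) \<in> E\<^sup>*" using z by simp_all
  have "is_lca E {u,w} z"
    unfolding is_lca_def reach_def
  proof (intro conjI notI)
    show "\<forall>v\<in>{u, w}. (z, v) \<in> E\<^sup>*" using zu zw by simp
  next
    assume "\<exists>u'. (z, u') \<in> E\<^sup>* \<and> z \<noteq> u' \<and> (\<forall>v\<in>{u, w}. (u', v) \<in> E\<^sup>*)"
    then obtain u' where zu': "(z,u') \<in> E\<^sup>*" "z \<noteq> u'" and u'u: "(u',u) \<in> E\<^sup>*" and u'w: "(u',w) \<in> E\<^sup>*"
      by blast
    have "(z,u') \<in> E\<^sup>+" using zu' by (simp add: rtrancl_eq_or_trancl)
    then obtain y where zy: "(z,y) \<in> E" and yu': "(y,u') \<in> E\<^sup>*" using tranclD by metis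
    have "(y,u) \<in> E\<^sup>*" using yu' u'u by (rule rtrancl_trans)
    moreover have "(y,w) \<in> E\<^sup>*" using yu' u'w by (rule rtrancl_trans)
    ultimately have "y \<in> ?A" by simp
    moreover have "(y,z) \<in> E\<inverse>" using zy by simp
    ultimately show False using zmin by blast
  qed
  then show ?thesis by blast
qed

lemma keyK:
  assumes c: "cactus_network V E" and lca: "is_lca E {a,b} x"
    and P: "dpath E P x a" and Q: "dpath E Q x b" and ab: "a \<noteq> b"
    and ac1: "(a,c) \<in> E" and bc: "(b,c) \<in> E"
    and uv: "(u,v) \<in> path_edges P" and vx: "v \<noteq> x" and wv: "(w,v) \<in> E"
  shows "w = u"
proof (rule ccontr)
  assume wu: "w \<noteq> u"
  note cb = cactus_basic[OF c]
  have eP: "path_edges P \<subseteq> E" using P by (simp add: dpath_iff)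
  have uvE: "(u,v) \<in> E" using uv eP by blast
  have uV: "u \<in> V" "w \<in> V" using uvE wv cb(3) by auto
  obtain y where ly: "is_lca E {u,w} y" using lca_exists[OF c uV] by blast
  then have "(y,u) \<in> E\<^sup>*" "(y,w) \<in> E\<^sup>*" unfolding is_lca_def reach_def by auto
  then obtain P' Q' where P': "dpath E P' y u" and Q': "dpath E Q' y w"
    using rtrancl_path by metis
  define f where "f = (\<lambda>(p::'a,q::'a). {p,q})"
  have C1: "ucycle E (P @ c # rev (tl Q)) \<and> cycle_edges (P @ c # rev (tl Q))
      = f ` (path_edges P \<union> path_edges Q \<union> {(a,c),(b,c)})"
    using cyc[OF cb(2) lca P Q ab ac1 bc] unfolding f_def .
  have C2: "ucycle E (P' @ v # rev (tl Q')) \<and> cycle_edges (P' @ v # rev (tl Q'))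
      = f ` (path_edges P' \<union> path_edges Q' \<union> {(u,v),(w,v)})"
    using cyc[OF cb(2) ly P' Q' wu[symmetric] uvE wv] unfolding f_def .
  have S1: "cycle_edges (P @ c # rev (tl Q)) \<in> simple_cycles E"
    using C1 unfolding simple_cycles_def by blast
  have S2: "cycle_edges (P' @ v # rev (tl Q')) \<in> simple_cycles E"
    using C2 unfolding simple_cycles_def by blast
  have in1: "{u,v} \<in> cycle_edges (P @ c # rev (tl Q))" using C1 uv unfolding f_def by force
  have in2: "{u,v} \<in> cycle_edges (P' @ v # rev (tl Q'))" using C2 unfolding f_def by force
  have eq: "cycle_edges (P @ c # rev (tl Q)) = cycle_edges (P' @ v # rev (tl Q'))"
  proof -
    have "\<forall>e C1 C2. C1 \<in> simple_cycles E \<and> C2 \<in> simple_cycles E \<and> e \<in> C1 \<and> e \<in> C2 \<longrightarrow> C1 = C2"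
      using c unfolding cactus_network_def by (elim conjE)
    then show ?thesis using S1 S2 in1 in2 by blast
  qed
  have "{w,v} \<in> cycle_edges (P' @ v # rev (tl Q'))" using C2 unfolding f_def by force
  then have "{w,v} \<in> f ` (path_edges P \<union> path_edges Q \<union> {(a,c),(b,c)})" using eq C1 by simp
  then obtain p q where pq: "(p,q) \<in> path_edges P \<union> path_edges Q \<union> {(a,c),(b,c)}" "{w,v} = {p,q}"
    unfolding f_def by auto
  have ac: "acyclic E" using cb(2) .
  have noboth: "(p,q) \<in> E \<Longrightarrow> (q,p) \<in> E \<Longrightarrow> False" for p q
  proof -
    assume "(p,q) \<in> E" "(q,p) \<in> E"
    then have "(p,p) \<in> E\<^sup>+" by (meson trancl.r_into_trancl trancl_trans)
    then show False using ac unfolding acyclic_def by blast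
  qed
  have vP: "v \<in> set P" using uv pe_mem2 by fast
  have cP: "c \<notin> set P" using c_notin[OF ac P ac1] .
  have dP: "distinct P" using distinct_path[OF ac eP] .
  have lP: "last P = a" and lQ: "last Q = b" and Pne: "P \<noteq> []" and Qne: "Q \<noteq> []"
    using P Q by (auto simp: dpath_iff)
  have aP: "a \<in> set P" using lP Pne by auto
  have bQ: "b \<in> set Q" using lQ Qne by auto
  have eQ: "path_edges Q \<subseteq> E" using Q by (simp add: dpath_iff)
  have vnQ: "v \<notin> set Q" using lca_inter[OF lca P Q vP] vx by blast
  have wvne: "w \<noteq> v" using wv ac unfolding acyclic_def by auto
  from pq consider "(p,q) \<in> path_edges P" | "(p,q) \<in> path_edges Q" | "(p,q) = (a,c)" | "(p,q) = (b,c)"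
    by blast
  then show False
  proof cases
    case 1
    then have "(w,v) \<in> path_edges P \<or> (v,w) \<in> path_edges P" using pq(2) wvne
      by (auto simp: doubleton_eq_iff)
    then show ?thesis
    proof
      assume "(w,v) \<in> path_edges P"
      then show False using pe_pred_unique[OF dP _ uv] wu by blast
    next
      assume "(v,w) \<in> path_edges P"
      then show False using eP noboth wv by blast
    qed
  next
    case 2
    then have "v \<in> set Q" using pq(2) pe_mem2[OF 2] by (auto simp: doubleton_eq_iff)
    then show ?thesis using vnQ by blast
  next
    case 3
    then have "(v = a \<and> w = c) \<or> (v = c)" using pq(2) by (auto simp: doubleton_eq_iff)
    then show ?thesis using noboth[OF ac1] wv vP cP by blast
  next
    case 4
    then have "v = b \<or> v = c" using pq(2) by (auto simp: doubleton_eq_iff)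
    then show ?thesis using bQ vnQ vP cP by blast
  qed
qed



lemma uniq:
  assumes ac: "acyclic E"
    and Q: "Q \<noteq> []" "hd Q = x" "path_edges Q \<subseteq> E"
  shows "\<And>P. (\<And>u v w. (u,v) \<in> path_edges P \<Longrightarrow> v \<noteq> x \<Longrightarrow> (w,v) \<in> E \<Longrightarrow> w = u) \<Longrightarrow>
     P \<noteq> [] \<Longrightarrow> hd P = x \<Longrightarrow> path_edges P \<subseteq> E \<Longrightarrow> last Q = last P \<Longrightarrow> Q = P"
  using Q
proof (induction Q rule: rev_induct)
  case Nil then show ?case by simp
next
  case (snoc v Q0)
  obtain P0 v' where Peq: "P = P0 @ [v']" using \<open>P \<noteq> []\<close> by (cases P rule: rev_exhaust) auto
  have vv: "v' = v" using snoc.prems Peq by simp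
  have dP: "distinct P" using distinct_path[OF ac snoc.prems(4)] .
  have dQ: "distinct (Q0 @ [v])" using distinct_path[OF ac snoc.prems(8)] .
  show ?case
  proof (cases "Q0 = []")
    case True
    then have vx: "v = x" using snoc.prems by simp
    have "P0 = []"
    proof (rule ccontr)
      assume "P0 \<noteq> []"
      then have "hd P0 = x" "x \<in> set P0" using snoc.prems Peq by auto
      then show False using dP Peq vv vx by simp
    qed
    then show ?thesis using True Peq vv by simp
  next
    case False
    show ?thesis
    proof (cases "P0 = []")
      case True
      then have "v = x" using snoc.prems Peq vv by simp
      moreover have "x \<in> set Q0" using False snoc.prems(7) by (cases Q0) auto
      ultimately show ?thesis using dQ by simp
    next
      case P0ne: False
      have e1: "(last P0, v) \<in> path_edges P" using Peq vv P0ne by (simp add: pe_snoc)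
      have hP0: "hd P0 = x" using snoc.prems Peq P0ne by simp
      have "x \<in> set P0" using hP0 P0ne by auto
      then have vx: "v \<noteq> x" using dP Peq vv by auto
      have e2: "(last Q0, v) \<in> E" using snoc.prems(8) False by (simp add: pe_snoc)
      have lq: "last Q0 = last P0" using snoc.prems(1)[OF e1 vx e2] .
      have subP: "path_edges P0 \<subseteq> path_edges P" using Peq vv P0ne by (auto simp: pe_snoc)
      have "Q0 = P0"
      proof (rule snoc.IH)
        show "\<And>u v w. (u,v) \<in> path_edges P0 \<Longrightarrow> v \<noteq> x \<Longrightarrow> (w,v) \<in> E \<Longrightarrow> w = u"
          using snoc.prems(1) subP by blast
        show "P0 \<noteq> []" "hd P0 = x" by fact+
        show "path_edges P0 \<subseteq> E" using subP snoc.prems(4) by blast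
        show "last Q0 = last P0" by fact
        show "Q0 \<noteq> []" by fact
        show "hd Q0 = x" using snoc.prems(7) False by simp
        show "path_edges Q0 \<subseteq> E" using snoc.prems(8) False by (auto simp: pe_snoc)
      qed
      then show ?thesis using Peq vv by simp
    qed
  qed
qed

lemma nosink_lemma:
  assumes K: "\<And>a b c. (a,b) \<in> path_edges P \<Longrightarrow> b \<noteq> s \<Longrightarrow> (c,b) \<in> E \<Longrightarrow> c = a"
    and P: "dpath E P s p" and v: "v \<in> set P" "v \<noteq> s"
    and fin: "finite {w. (w,v) \<in> E}"
  shows "\<not> is_sink E v"
proof
    assume sk: "is_sink E v"
    have "hd P = s" using P by (simp add: dpath_iff)
    then obtain u where u: "(u,v) \<in> path_edges P" using has_pred v by metis
    have "{w. (w,v) \<in> E} \<subseteq> {u}" using K[OF u v(2)] by blast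
    then have "card {w. (w,v) \<in> E} \<le> 1" by (metis card.empty card.insert card_mono empty_iff finite.emptyI finite.insertI One_nat_def)
    then show False using sk unfolding is_sink_def indeg_def by simp
qed

theorem lemma5:
  fixes V :: "'a set" and E :: "('a \<times> 'a) set"
  assumes cactus: "cactus_network V E"
    and t_V: "t \<in> V"
    and sink: "is_sink E t"
    and parl: "(pl, t) \<in> E" and parr: "(pr, t) \<in> E" and neq: "pl \<noteq> pr"
    and lca: "is_lca E {pl, pr} s"
    and Pl: "dpath E Pl s pl" and Pr: "dpath E Pr s pr"
  shows "path_edges Pl \<inter> path_edges Pr = {} \<and>
         (\<forall>v \<in> set Pl \<union> set Pr. is_sink E v \<longrightarrow> v = s) \<and>
         (\<forall>Q. dpath E Q s pl \<longrightarrow> Q = Pl) \<and>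
         (\<forall>Q. dpath E Q s pr \<longrightarrow> Q = Pr)"
proof -
  note cb = cactus_basic[OF cactus]
  have ac: "acyclic E" using cb(2) .
  have lca': "is_lca E {pr, pl} s" using lca by (simp add: insert_commute)
  have KL: "\<And>u v w. (u,v) \<in> path_edges Pl \<Longrightarrow> v \<noteq> s \<Longrightarrow> (w,v) \<in> E \<Longrightarrow> w = u"
    using keyK[OF cactus lca Pl Pr neq parl parr] by blast
  have KR: "\<And>u v w. (u,v) \<in> path_edges Pr \<Longrightarrow> v \<noteq> s \<Longrightarrow> (w,v) \<in> E \<Longrightarrow> w = u"
    using keyK[OF cactus lca' Pr Pl neq[symmetric] parr parl] by blast
  have inter: "\<And>y. y \<in> set Pl \<Longrightarrow> y \<in> set Pr \<Longrightarrow> y = s"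
    using lca_inter[OF lca Pl Pr] by blast
  have fin: "\<And>v. finite {w. (w,v) \<in> E}"
  proof -
    fix v
    have "{w. (w,v) \<in> E} \<subseteq> fst ` E" by force
    then show "finite {w. (w,v) \<in> E}" using cb(1) by (simp add: finite_subset)
  qed
  have i: "path_edges Pl \<inter> path_edges Pr = {}"
  proof (rule ccontr)
    assume "path_edges Pl \<inter> path_edges Pr \<noteq> {}"
    then obtain p q where pq: "(p,q) \<in> path_edges Pl" "(p,q) \<in> path_edges Pr" by auto
    then have "p = s" "q = s" using inter pe_mem2 by metis+
    moreover have "(p,q) \<in> E" using pq Pl by (auto simp: dpath_iff)
    ultimately show False using ac unfolding acyclic_def by auto
  qed
  have ii: "\<forall>v \<in> set Pl \<union> set Pr. is_sink E v \<longrightarrow> v = s"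
  proof -
    have nl: "\<not> is_sink E v" if "v \<in> set Pl" "v \<noteq> s" for v
    proof (rule nosink_lemma[where P=Pl and s=s and E=E and p=pl])
      show "\<And>a b c. (a,b) \<in> path_edges Pl \<Longrightarrow> b \<noteq> s \<Longrightarrow> (c,b) \<in> E \<Longrightarrow> c = a"
        using KL by blast
    qed (use that Pl fin in auto)
    have nr: "\<not> is_sink E v" if "v \<in> set Pr" "v \<noteq> s" for v
    proof (rule nosink_lemma[where P=Pr and s=s and E=E and p=pr])
      show "\<And>a b c. (a,b) \<in> path_edges Pr \<Longrightarrow> b \<noteq> s \<Longrightarrow> (c,b) \<in> E \<Longrightarrow> c = a"
        using KR by blast
    qed (use that Pr fin in auto)
    show ?thesis using nl nr by blast
  qed
  have iii: "\<forall>Q. dpath E Q s pl \<longrightarrow> Q = Pl"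
  proof (intro allI impI)
    fix Q assume "dpath E Q s pl"
    then show "Q = Pl" using uniq[OF ac, of Q s Pl] KL Pl by (auto simp: dpath_iff)
  qed
  have iv: "\<forall>Q. dpath E Q s pr \<longrightarrow> Q = Pr"
  proof (intro allI impI)
    fix Q assume "dpath E Q s pr"
    then show "Q = Pr" using uniq[OF ac, of Q s Pr] KR Pr by (auto simp: dpath_iff)
  qed
  show ?thesis using i ii iii iv by blast
qed

end
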